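(* (SEM-ME) Let $M$ be a canonical linear SEM-ME satisfying SEM-ME faithfulness part (a). Then there is a total order on the ancestral ordered groups of $M$ such that, for every model $M'$ in the AOG equivalence class of $M$, every edge of $M'$ between variables lying in two different ancestral ordered groups goes from the earlier group to the later group. (SEM-UR) The analogous statement holds for a linear SEM-UR $M$ satisfying SEM-UR faithfulness part (a) and any $M'$ in its AOG equivalence class.
   Context: Linear SEM-ME (canonical form): underlying variables $V_1,\dots,V_p$ partitioned into unobserved $\mathcal Z$ and observed $\mathcal Y$, $V_i=\sum_{V_j\in Pa(V_i)}c_{ij}V_j+N_{V_i}$ over a DAG (edge $V_j\to V_i$ iff $c_{ij}\ne0$), measurements $U_i=Z_i+N_{U_i}$, independent noises. A u-leaf node is a $Z$-variable with no children; all others are nu-leaf nodes; in canonical form u-leaf nodes have zero noise and nu-leaf nodes nondegenerate noise. Since observedness of non-leaf variables does not affect the mixing matrix, a model is specified by its weighted DAG on the underlying variables and its set of u-leaf nodes. The mixing matrix $\mathbf W^{ME}$ has rows indexed by underlying variables, columns by noise terms $N_{V'}$ of nu-leaf nodes, $(V,N_{V'})$ entry = total causal effect of $V'$ on $V$ (sum over directed paths of products of weights; $1$ if $V=V'$). Linear SEM-UR: $H=N_H$, $X=\mathbf BH+\mathbf AX+N_X$ with $\mathbf A$ strictly lower triangular, independent noises; diagram has edges $H_i\to X_j$ iff $b_{ji}\neq0$ and $X_k\to X_j$ iff $a_{jk}\ne 0$; mixing matrix $\mathbf W^{UR}=[(\mathbf I-\mathbf A)^{-1}\mathbf B\;\;(\mathbf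 I-\mathbf A)^{-1}]$ with rows indexed by observed variables and columns by noise terms. $Pa,Ch,An,De$ denote parents, children, ancestors, descendants, with $An(V),De(V)$ excluding $V$. Faithfulness part (a): SEM-ME: the total causal effect of any underlying variable on any of its descendants is nonzero. SEM-UR: the total causal effect of any observed or latent variable on any of its descendants is nonzero. Ancestral ordered grouping (AOG). SEM-ME: each nu-leaf node is put in its own group; each u-leaf node $Z_j$ is put in the group of a parent $V_i$ if $Z_j$ has no other parents or all other parents of $Z_j$ are ancestors of $V_i$; otherwise $Z_j$ forms a singleton group. SEM-UR: each observed variable is put in its own group; each latent $H_j$ is put in the group of a child $X_i$ if $H_j$ has no other children or all other children of $H_j$ are descendants of $X_i$; otherwise $H_j$ forms a singleton group. AOG equivalence class of $M$: SEM-ME: the set of canonical SEM-ME models on the same underlying variables whose mixing matrix equals that of $M$ up to permutation and nonzero scaling of columns (rows matched by variable) and whose AOG is the same partition. SEM-UR: the set of SEM-UR models on the same observed variables with the same number of latent variables whose mixing matrix equals that of $M$ up to permutation and nonzero scaling of columns and whose AOG coincides with that of $M$ (up to relabeling latent variables). *)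

theory Defs
  imports Complex_Main
begin

text \<open>A weighted graph on node set V is given by w, where w y x is the weight of the
  edge x -> y (the edge exists iff w y x is nonzero).\<close>

definition edge_rel :: "'v set \<Rightarrow> ('v \<Rightarrow> 'v \<Rightarrow> real) \<Rightarrow> ('v \<times> 'v) set" where
  "edge_rel V w = {(x, y). x \<in> V \<and> y \<in> V \<and> w y x \<noteq> 0}"

definition parents :: "'v set \<Rightarrow> ('v \<Rightarrow> 'v \<Rightarrow> real) \<Rightarrow> 'v \<Rightarrow> 'v set" where
  "parents V w x = {y. (y, x) \<in> edge_rel V w}"

definition children :: "'v set \<Rightarrow> ('v \<Rightarrow> 'v \<Rightarrow> real) \<Rightarrow> 'v \<Rightarrow> 'v set" where
  "children V w x = {y. (x, y) \<in> edge_rel V w}"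

definition ancestors :: "'v set \<Rightarrow> ('v \<Rightarrow> 'v \<Rightarrow> real) \<Rightarrow> 'v \<Rightarrow> 'v set" where
  "ancestors V w x = {y. (y, x) \<in> (edge_rel V w)\<^sup>+}"

definition descendants :: "'v set \<Rightarrow> ('v \<Rightarrow> 'v \<Rightarrow> real) \<Rightarrow> 'v \<Rightarrow> 'v set" where
  "descendants V w x = {y. (x, y) \<in> (edge_rel V w)\<^sup>+}"

text \<open>Directed path from a to b, as the list of its nodes (in a DAG every directed path
  is simple, so distinctness is no restriction).\<close>
definition is_dpath :: "'v set \<Rightarrow> ('v \<Rightarrow> 'v \<Rightarrow> real) \<Rightarrow> 'v \<Rightarrow> 'v \<Rightarrow> 'v list \<Rightarrow> bool" where
  "is_dpath V w a b xs \<longleftrightarrow> xs \<noteq> [] \<and> hd xs = a \<and> last xs = b \<and> set xs \<subseteq> V \<and> distinct xs \<and>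
     (\<forall>k. Suc k < length xs \<longrightarrow> w (xs ! Suc k) (xs ! k) \<noteq> 0)"

definition path_weight :: "('v \<Rightarrow> 'v \<Rightarrow> real) \<Rightarrow> 'v list \<Rightarrow> real" where
  "path_weight w xs = (\<Prod>k < length xs - 1. w (xs ! Suc k) (xs ! k))"

definition total_effect :: "'v set \<Rightarrow> ('v \<Rightarrow> 'v \<Rightarrow> real) \<Rightarrow> 'v \<Rightarrow> 'v \<Rightarrow> real" where
  "total_effect V w a b = (\<Sum>xs \<in> {xs. is_dpath V w a b xs}. path_weight w xs)"

text \<open>Underlying variables V_0, ..., V_(p-1) are the naturals below p; c i j is the weight
  c_ij of the edge V_j -> V_i; U is the set of u-leaf nodes.\<close>

definition me_nodes :: "nat \<Rightarrow> nat set" where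
  "me_nodes p = {..<p}"

definition sem_me :: "nat \<Rightarrow> (nat \<Rightarrow> nat \<Rightarrow> real) \<Rightarrow> nat set \<Rightarrow> bool" where
  "sem_me p c U \<longleftrightarrow>
     (\<forall>i j. c i j \<noteq> 0 \<longrightarrow> i < p \<and> j < p) \<and>
     acyclic (edge_rel (me_nodes p) c) \<and>
     U \<subseteq> me_nodes p \<and>
     (\<forall>u \<in> U. children (me_nodes p) c u = {})"

definition me_faithful_a :: "nat \<Rightarrow> (nat \<Rightarrow> nat \<Rightarrow> real) \<Rightarrow> bool" where
  "me_faithful_a p c \<longleftrightarrow>
     (\<forall>a \<in> me_nodes p. \<forall>b \<in> descendants (me_nodes p) c a. total_effect (me_nodes p) c a b \<noteq> 0)"

text \<open>Mixing matrix: row V, column N_V' (V' a nu-leaf node).\<close>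
definition me_cols :: "nat \<Rightarrow> nat set \<Rightarrow> nat set" where
  "me_cols p U = me_nodes p - U"

definition me_mix :: "nat \<Rightarrow> (nat \<Rightarrow> nat \<Rightarrow> real) \<Rightarrow> nat \<Rightarrow> nat \<Rightarrow> real" where
  "me_mix p c v v' = total_effect (me_nodes p) c v' v"

definition me_mix_equiv ::
  "nat \<Rightarrow> (nat \<Rightarrow> nat \<Rightarrow> real) \<Rightarrow> nat set \<Rightarrow> (nat \<Rightarrow> nat \<Rightarrow> real) \<Rightarrow> nat set \<Rightarrow> bool" where
  "me_mix_equiv p c U c' U' \<longleftrightarrow>
     (\<exists>\<sigma> (sc :: nat \<Rightarrow> real). bij_betw \<sigma> (me_cols p U) (me_cols p U') \<and>
        (\<forall>k \<in> me_cols p U. sc k \<noteq> 0 \<and>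
           (\<forall>v \<in> me_nodes p. me_mix p c' v (\<sigma> k) = sc k * me_mix p c v k)))"

text \<open>Ancestral ordered grouping. me_att p c U x i: node x lies in the group of the
  nu-leaf node i.\<close>
definition me_att :: "nat \<Rightarrow> (nat \<Rightarrow> nat \<Rightarrow> real) \<Rightarrow> nat set \<Rightarrow> nat \<Rightarrow> nat \<Rightarrow> bool" where
  "me_att p c U x i \<longleftrightarrow>
     (x = i \<and> x \<in> me_nodes p \<and> x \<notin> U) \<or>
     (x \<in> U \<and> i \<in> parents (me_nodes p) c x \<and>
        parents (me_nodes p) c x - {i} \<subseteq> ancestors (me_nodes p) c i)"

definition me_group :: "nat \<Rightarrow> (nat \<Rightarrow> nat \<Rightarrow> real) \<Rightarrow> nat set \<Rightarrow> nat \<Rightarrow> nat set" where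
  "me_group p c U v =
     {u \<in> me_nodes p. u = v \<or> (\<exists>i. me_att p c U u i \<and> me_att p c U v i)}"

definition me_aog :: "nat \<Rightarrow> (nat \<Rightarrow> nat \<Rightarrow> real) \<Rightarrow> nat set \<Rightarrow> nat set set" where
  "me_aog p c U = me_group p c U ` me_nodes p"

definition me_aog_class :: "nat \<Rightarrow> (nat \<Rightarrow> nat \<Rightarrow> real) \<Rightarrow> nat set \<Rightarrow>
    ((nat \<Rightarrow> nat \<Rightarrow> real) \<times> nat set) set" where
  "me_aog_class p c U =
     {(c', U'). sem_me p c' U' \<and> me_mix_equiv p c U c' U' \<and> me_aog p c' U' = me_aog p c U}"

text \<open>Observed X_0..X_(n-1), latent H_0..H_(m-1). Nodes of the diagram: Inl i = H_i,
  Inr j = X_j. A j k = a_jk, B j i = b_ji.\<close>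

definition ur_nodes :: "nat \<Rightarrow> nat \<Rightarrow> (nat + nat) set" where
  "ur_nodes n m = Inl ` {..<m} \<union> Inr ` {..<n}"

definition sem_ur :: "nat \<Rightarrow> nat \<Rightarrow> (nat \<Rightarrow> nat \<Rightarrow> real) \<Rightarrow> (nat \<Rightarrow> nat \<Rightarrow> real) \<Rightarrow> bool" where
  "sem_ur n m A B \<longleftrightarrow>
     (\<forall>j k. A j k \<noteq> 0 \<longrightarrow> k < j \<and> j < n) \<and>
     (\<forall>j i. B j i \<noteq> 0 \<longrightarrow> j < n \<and> i < m)"

definition ur_w :: "(nat \<Rightarrow> nat \<Rightarrow> real) \<Rightarrow> (nat \<Rightarrow> nat \<Rightarrow> real) \<Rightarrow> nat + nat \<Rightarrow> nat + nat \<Rightarrow> real" where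
  "ur_w A B y x = (case (y, x) of
      (Inr j, Inl i) \<Rightarrow> B j i
    | (Inr j, Inr k) \<Rightarrow> A j k
    | _ \<Rightarrow> 0)"

definition ur_faithful_a :: "nat \<Rightarrow> nat \<Rightarrow> (nat \<Rightarrow> nat \<Rightarrow> real) \<Rightarrow> (nat \<Rightarrow> nat \<Rightarrow> real) \<Rightarrow> bool" where
  "ur_faithful_a n m A B \<longleftrightarrow>
     (\<forall>a \<in> ur_nodes n m. \<forall>b \<in> descendants (ur_nodes n m) (ur_w A B) a.
        total_effect (ur_nodes n m) (ur_w A B) a b \<noteq> 0)"

text \<open>(I - A)^(-1), as the n x n matrix T with (I - A) T = I.\<close>
definition ur_inv :: "nat \<Rightarrow> (nat \<Rightarrow> nat \<Rightarrow> real) \<Rightarrow> nat \<Rightarrow> nat \<Rightarrow> real" where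
  "ur_inv n A = (THE T. (\<forall>i j. \<not> (i < n \<and> j < n) \<longrightarrow> T i j = 0) \<and>
      (\<forall>i < n. \<forall>j < n.
         (\<Sum>k < n. ((if i = k then 1 else 0) - A i k) * T k j) = (if i = j then 1 else 0)))"

text \<open>Mixing matrix [(I-A)^(-1) B, (I-A)^(-1)]; column Inl i = N_(H_i), Inr k = N_(X_k).\<close>
definition ur_cols :: "nat \<Rightarrow> nat \<Rightarrow> (nat + nat) set" where
  "ur_cols n m = Inl ` {..<m} \<union> Inr ` {..<n}"

definition ur_mix :: "nat \<Rightarrow> (nat \<Rightarrow> nat \<Rightarrow> real) \<Rightarrow> (nat \<Rightarrow> nat \<Rightarrow> real) \<Rightarrow> nat \<Rightarrow> nat + nat \<Rightarrow> real" where
  "ur_mix n A B j col = (case col of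
      Inl i \<Rightarrow> (\<Sum>k < n. ur_inv n A j k * B k i)
    | Inr k \<Rightarrow> ur_inv n A j k)"

definition ur_mix_equiv :: "nat \<Rightarrow> nat \<Rightarrow> (nat \<Rightarrow> nat \<Rightarrow> real) \<Rightarrow> (nat \<Rightarrow> nat \<Rightarrow> real) \<Rightarrow>
    (nat \<Rightarrow> nat \<Rightarrow> real) \<Rightarrow> (nat \<Rightarrow> nat \<Rightarrow> real) \<Rightarrow> bool" where
  "ur_mix_equiv n m A B A' B' \<longleftrightarrow>
     (\<exists>\<sigma> (sc :: nat + nat \<Rightarrow> real). bij_betw \<sigma> (ur_cols n m) (ur_cols n m) \<and>
        (\<forall>col \<in> ur_cols n m. sc col \<noteq> 0 \<and>
           (\<forall>j < n. ur_mix n A' B' j (\<sigma> col) = sc col * ur_mix n A B j col)))"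

text \<open>Ancestral ordered grouping. ur_att x y: node x lies in the group of the observed
  node y.\<close>
definition ur_att :: "nat \<Rightarrow> nat \<Rightarrow> (nat \<Rightarrow> nat \<Rightarrow> real) \<Rightarrow> (nat \<Rightarrow> nat \<Rightarrow> real) \<Rightarrow>
    nat + nat \<Rightarrow> nat + nat \<Rightarrow> bool" where
  "ur_att n m A B x y \<longleftrightarrow>
     (x = y \<and> x \<in> Inr ` {..<n}) \<or>
     (x \<in> Inl ` {..<m} \<and> y \<in> children (ur_nodes n m) (ur_w A B) x \<and>
        children (ur_nodes n m) (ur_w A B) x - {y} \<subseteq> descendants (ur_nodes n m) (ur_w A B) y)"

definition ur_group :: "nat \<Rightarrow> nat \<Rightarrow> (nat \<Rightarrow> nat \<Rightarrow> real) \<Rightarrow> (nat \<Rightarrow> nat \<Rightarrow> real) \<Rightarrow>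
    nat + nat \<Rightarrow> (nat + nat) set" where
  "ur_group n m A B v =
     {u \<in> ur_nodes n m. u = v \<or> (\<exists>y. ur_att n m A B u y \<and> ur_att n m A B v y)}"

definition ur_aog :: "nat \<Rightarrow> nat \<Rightarrow> (nat \<Rightarrow> nat \<Rightarrow> real) \<Rightarrow> (nat \<Rightarrow> nat \<Rightarrow> real) \<Rightarrow> (nat + nat) set set" where
  "ur_aog n m A B = ur_group n m A B ` ur_nodes n m"

definition ur_relabel :: "(nat \<Rightarrow> nat) \<Rightarrow> nat + nat \<Rightarrow> nat + nat" where
  "ur_relabel \<pi> = map_sum \<pi> id"

text \<open>Members of the AOG equivalence class, together with a latent relabelling pi
  witnessing that the AOGs coincide.\<close>
definition ur_aog_class :: "nat \<Rightarrow> nat \<Rightarrow> (nat \<Rightarrow> nat \<Rightarrow> real) \<Rightarrow> (nat \<Rightarrow> nat \<Rightarrow> real) \<Rightarrow>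
    ((nat \<Rightarrow> nat \<Rightarrow> real) \<times> (nat \<Rightarrow> nat \<Rightarrow> real) \<times> (nat \<Rightarrow> nat)) set" where
  "ur_aog_class n m A B =
     {(A', B', \<pi>). sem_ur n m A' B' \<and> ur_mix_equiv n m A B A' B' \<and>
        bij_betw \<pi> {..<m} {..<m} \<and>
        ur_aog n m A' B' = (\<lambda>G. ur_relabel \<pi> ` G) ` ur_aog n m A B}"

end

theory Submission imports Defs begin


lemma linear_order_key:
  fixes f :: "'a \<Rightarrow> nat"
  assumes "inj_on f A"
  shows "linear_order_on A {(x, y). x \<in> A \<and> y \<in> A \<and> f x \<le> f y}"
  using assms
  unfolding linear_order_on_def partial_order_on_def preorder_on_def refl_on_def trans_def
    antisym_def total_on_def
  by (auto simp: inj_on_def)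

definition ggroup :: "'a set \<Rightarrow> ('a \<Rightarrow> 'a \<Rightarrow> bool) \<Rightarrow> 'a \<Rightarrow> 'a set" where
  "ggroup N att v = {u \<in> N. u = v \<or> (\<exists>i. att u i \<and> att v i)}"

locale grouping =
  fixes N :: "'a set" and att :: "'a \<Rightarrow> 'a \<Rightarrow> bool"
  assumes att_uniq: "\<And>x i i'. att x i \<Longrightarrow> att x i' \<Longrightarrow> i = i'"
begin

lemma mem_gg: "u \<in> ggroup N att v \<longleftrightarrow> u \<in> N \<and> (u = v \<or> (\<exists>i. att u i \<and> att v i))"
  by (simp add: ggroup_def)

lemma gg_self: "v \<in> N \<Longrightarrow> v \<in> ggroup N att v"
  by (simp add: mem_gg)

lemma gg_sym: "u \<in> ggroup N att v \<Longrightarrow> v \<in> N \<Longrightarrow> v \<in> ggroup N att u"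
  by (auto simp: mem_gg)

lemma gg_eq: assumes "u \<in> ggroup N att v" "v \<in> N" shows "ggroup N att u = ggroup N att v"
proof
  show "ggroup N att u \<subseteq> ggroup N att v"
  proof
    fix z assume z: "z \<in> ggroup N att u"
    from assms(1) have "u = v \<or> (\<exists>i. att u i \<and> att v i)" by (simp add: mem_gg)
    moreover from z have "z \<in> N" "z = u \<or> (\<exists>i. att z i \<and> att u i)" by (simp_all add: mem_gg)
    ultimately show "z \<in> ggroup N att v" using att_uniq unfolding mem_gg by metis
  qed
next
  show "ggroup N att v \<subseteq> ggroup N att u"
  proof
    fix z assume z: "z \<in> ggroup N att v"
    from assms(1) have "u = v \<or> (\<exists>i. att u i \<and> att v i)" by (simp add: mem_gg)
    moreover from z have "z \<in> N" "z = v \<or> (\<exists>i. att z i \<and> att v i)" by (simp_all add: mem_gg)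
    ultimately show "z \<in> ggroup N att u" using att_uniq unfolding mem_gg by metis
  qed
qed

lemma gg_share: "z \<in> ggroup N att v1 \<Longrightarrow> z \<in> ggroup N att v2 \<Longrightarrow> v1 \<in> N \<Longrightarrow> v2 \<in> N
   \<Longrightarrow> ggroup N att v1 = ggroup N att v2"
  using gg_eq by metis

end



locale dag =
  fixes V :: "'v set" and w :: "'v \<Rightarrow> 'v \<Rightarrow> real"
  assumes finV: "finite V"
    and supp: "\<And>x y. w y x \<noteq> 0 \<Longrightarrow> x \<in> V \<and> y \<in> V"
    and acyc: "acyclic (edge_rel V w)"
begin

abbreviation "E \<equiv> edge_rel V w"

lemma E_iff: "(x, y) \<in> E \<longleftrightarrow> w y x \<noteq> 0"
  using supp by (auto simp: edge_rel_def)

lemma no_loop: "(x, x) \<notin> E\<^sup>+"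
  using acyc by (simp add: acyclic_def)

lemma dpath_edge: "is_dpath V w a b xs \<Longrightarrow> Suc k < length xs \<Longrightarrow> w (xs ! Suc k) (xs ! k) \<noteq> 0"
  unfolding is_dpath_def by blast

lemma path_chain:
  assumes "is_dpath V w a b xs" "i \<le> j" "j < length xs"
  shows "(xs ! i, xs ! j) \<in> E\<^sup>*"
  using assms(2,3)
proof (induction j)
  case 0 then show ?case by simp
next
  case (Suc j)
  show ?case
  proof (cases "i = Suc j")
    case True then show ?thesis by simp
  next
    case False
    then have "i \<le> j" using Suc.prems by simp
    then have "(xs ! i, xs ! j) \<in> E\<^sup>*" using Suc by simp
    moreover have "w (xs ! Suc j) (xs ! j) \<noteq> 0" using assms(1) Suc.prems
      by (simp add: is_dpath_def)
    then have "(xs ! j, xs ! Suc j) \<in> E" by (simp add: E_iff)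
    ultimately show ?thesis by (rule rtrancl_into_rtrancl)
  qed
qed

lemma path_last: "is_dpath V w a b xs \<Longrightarrow> last xs = xs ! (length xs - 1)"
proof -
  assume "is_dpath V w a b xs"
  then have "xs \<noteq> []" by (simp add: is_dpath_def)
  then show ?thesis by (rule last_conv_nth)
qed

lemma path_hd: "is_dpath V w a b xs \<Longrightarrow> hd xs = xs ! 0"
proof -
  assume "is_dpath V w a b xs"
  then have "xs \<noteq> []" by (simp add: is_dpath_def)
  then show ?thesis by (rule hd_conv_nth)
qed

lemma path_reach: assumes "is_dpath V w a b xs" shows "(a, b) \<in> E\<^sup>*"
proof -
  have ne: "xs \<noteq> []" using assms by (simp add: is_dpath_def)
  have "(xs ! 0, xs ! (length xs - 1)) \<in> E\<^sup>*"
    using path_chain[OF assms, of 0 "length xs - 1"] ne by simp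
  moreover have "xs ! 0 = a" using path_hd[OF assms] assms by (simp add: is_dpath_def)
  moreover have "xs ! (length xs - 1) = b" using path_last[OF assms] assms by (simp add: is_dpath_def)
  ultimately show ?thesis by simp
qed

lemma path_mem_reach: assumes "is_dpath V w a b xs" "x \<in> set xs" shows "(x, b) \<in> E\<^sup>*"
proof -
  obtain i where i: "i < length xs" "xs ! i = x" using assms(2) by (meson in_set_conv_nth)
  have "(xs ! i, xs ! (length xs - 1)) \<in> E\<^sup>*" using path_chain[OF assms(1), of i "length xs - 1"] i
    by simp
  moreover have "xs ! (length xs - 1) = b" using path_last[OF assms(1)] assms(1) by (simp add: is_dpath_def)
  ultimately show ?thesis using i by simp
qed

lemma paths_finite: "finite {xs. is_dpath V w a b xs}"
proof -
  have "{xs. is_dpath V w a b xs} \<subseteq> {xs. set xs \<subseteq> V \<and> length xs \<le> card V}"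
  proof
    fix xs assume "xs \<in> {xs. is_dpath V w a b xs}"
    then have "set xs \<subseteq> V" "distinct xs" by (auto simp: is_dpath_def)
    then have "length xs \<le> card V" using distinct_card[of xs] card_mono[OF finV] by metis
    then show "xs \<in> {xs. set xs \<subseteq> V \<and> length xs \<le> card V}" using \<open>set xs \<subseteq> V\<close> by simp
  qed
  then show ?thesis using finite_lists_length_le[OF finV] finite_subset by blast
qed

lemma path_single: "a \<in> V \<Longrightarrow> is_dpath V w a a [a]"
  by (simp add: is_dpath_def)

lemma paths_aa: assumes "is_dpath V w a a xs" shows "xs = [a]"
proof (cases "length xs \<ge> 2")
  case True
  have e: "w (xs ! 1) (xs ! 0) \<noteq> 0" using dpath_edge[OF assms, of 0] True by (simp add: One_nat_def)
  then have "(xs ! 0, xs ! 1) \<in> E" by (simp add: E_iff)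
  moreover have "(xs ! 1, xs ! (length xs - 1)) \<in> E\<^sup>*"
    using path_chain[OF assms, of 1 "length xs - 1"] True by simp
  ultimately have "(xs ! 0, xs ! (length xs - 1)) \<in> E\<^sup>+" by (rule rtrancl_into_trancl2)
  moreover have "xs ! 0 = a" using path_hd[OF assms] assms by (simp add: is_dpath_def)
  moreover have "xs ! (length xs - 1) = a" using path_last[OF assms] assms by (simp add: is_dpath_def)
  ultimately have "(a, a) \<in> E\<^sup>+" by simp
  then show ?thesis using no_loop by simp
next
  case False
  have ne: "xs \<noteq> []" using assms by (simp add: is_dpath_def)
  then have "length xs \<noteq> 0" by simp
  then have "length xs = 1" using False by arith
  then obtain x where x: "xs = [x]" by (metis length_0_conv length_Suc_conv One_nat_def)
  have "hd xs = a" using assms by (simp add: is_dpath_def)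
  then show ?thesis using x by simp
qed

lemma TE_refl: "a \<in> V \<Longrightarrow> total_effect V w a a = 1"
proof -
  assume a: "a \<in> V"
  have "{xs. is_dpath V w a a xs} = {[a]}" using paths_aa path_single[OF a] by blast
  then show ?thesis by (simp add: total_effect_def path_weight_def)
qed

lemma TE_nz: "total_effect V w a b \<noteq> 0 \<Longrightarrow> (a, b) \<in> E\<^sup>*"
proof -
  assume "total_effect V w a b \<noteq> 0"
  then have "{xs. is_dpath V w a b xs} \<noteq> {}" unfolding total_effect_def by (metis sum.empty)
  then show ?thesis using path_reach by blast
qed

lemma pw_snoc: assumes "ys \<noteq> []" shows "path_weight w (ys @ [b]) = path_weight w ys * w b (last ys)"
proof -
  obtain n where n: "length ys = Suc n" using assms by (cases ys) auto
  have "path_weight w (ys @ [b]) = (\<Prod>k<Suc n. w ((ys @ [b]) ! Suc k) ((ys @ [b]) ! k))"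
    by (simp add: path_weight_def n)
  also have "\<dots> = (\<Prod>k<n. w ((ys @ [b]) ! Suc k) ((ys @ [b]) ! k)) * w b (ys ! n)"
    by (simp add: n nth_append)
  also have "(\<Prod>k<n. w ((ys @ [b]) ! Suc k) ((ys @ [b]) ! k)) = (\<Prod>k<n. w (ys ! Suc k) (ys ! k))"
    by (rule prod.cong) (auto simp: n nth_append)
  also have "\<dots> = path_weight w ys" by (simp add: path_weight_def n)
  finally show ?thesis using n by (simp add: last_conv_nth assms)
qed

lemma paths_decomp:
  assumes ab: "a \<noteq> b" and bV: "b \<in> V"
  shows "{xs. is_dpath V w a b xs} =
    (\<lambda>(j, ys). ys @ [b]) ` (SIGMA j:{j \<in> V. w b j \<noteq> 0}. {ys. is_dpath V w a j ys})"
proof (intro equalityI subsetI)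
  fix xs assume "xs \<in> {xs. is_dpath V w a b xs}"
  then have P: "is_dpath V w a b xs" by simp
  have len: "length xs \<ge> 2"
  proof (rule ccontr)
    assume "\<not> 2 \<le> length xs"
    moreover have "xs \<noteq> []" using P by (simp add: is_dpath_def)
    moreover have "length xs \<noteq> 0" using \<open>xs \<noteq> []\<close> by simp
    ultimately have "length xs = 1" by arith
    then obtain x where "xs = [x]" by (metis length_0_conv length_Suc_conv One_nat_def)
    then show False using P ab by (auto simp: is_dpath_def)
  qed
  define ys where "ys = butlast xs"
  define j where "j = last ys"
  have "length ys \<ge> 1" using len by (simp add: ys_def)
  then have ne: "ys \<noteq> []" by (cases ys) auto
  have "xs \<noteq> []" "last xs = b" using P by (simp_all add: is_dpath_def)
  then have xs_eq: "xs = ys @ [b]" unfolding ys_def by (metis append_butlast_last_id)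
  have lys: "length ys = length xs - 1" by (simp add: ys_def)
  have Pys: "is_dpath V w a j ys"
    unfolding is_dpath_def
  proof (intro conjI allI impI)
    show "ys \<noteq> []" by fact
    have "hd xs = a" using P by (simp add: is_dpath_def)
    then show "hd ys = a" using ne xs_eq by (metis hd_append2)
    show "last ys = j" by (simp add: j_def)
    show "set ys \<subseteq> V" using P by (auto simp: is_dpath_def ys_def dest: in_set_butlastD)
    show "distinct ys" using P by (simp add: is_dpath_def ys_def distinct_butlast)
    fix k assume k: "Suc k < length ys"
    then have "Suc k < length xs" using xs_eq by simp
    then have "w (xs ! Suc k) (xs ! k) \<noteq> 0" by (rule dpath_edge[OF P])
    moreover have "xs ! Suc k = ys ! Suc k" "xs ! k = ys ! k" using k xs_eq by (simp_all add: nth_append)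
    ultimately show "w (ys ! Suc k) (ys ! k) \<noteq> 0" by simp
  qed
  have "w b j \<noteq> 0"
  proof -
    have "Suc (length ys - 1) < length xs" using ne xs_eq by simp
    then have "w (xs ! Suc (length ys - 1)) (xs ! (length ys - 1)) \<noteq> 0"
      by (rule dpath_edge[OF P])
    then show ?thesis using ne xs_eq by (simp add: nth_append j_def last_conv_nth)
  qed
  moreover have "j \<in> V" using calculation supp by blast
  ultimately have "(j, ys) \<in> (SIGMA j:{j \<in> V. w b j \<noteq> 0}. {ys. is_dpath V w a j ys})"
    using Pys by simp
  then show "xs \<in> (\<lambda>(j, ys). ys @ [b]) ` (SIGMA j:{j \<in> V. w b j \<noteq> 0}. {ys. is_dpath V w a j ys})"
    using xs_eq by (intro image_eqI[where x="(j, ys)"]) simp_all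
next
  fix xs assume "xs \<in> (\<lambda>(j, ys). ys @ [b]) ` (SIGMA j:{j \<in> V. w b j \<noteq> 0}. {ys. is_dpath V w a j ys})"
  then obtain j ys where j: "j \<in> V" "w b j \<noteq> 0" and Pys: "is_dpath V w a j ys" and xs: "xs = ys @ [b]"
    by auto
  have ne: "ys \<noteq> []" using Pys by (simp add: is_dpath_def)
  have bnot: "b \<notin> set ys"
  proof
    assume "b \<in> set ys"
    then have "(b, j) \<in> E\<^sup>*" using path_mem_reach[OF Pys] by simp
    moreover have "(j, b) \<in> E" using j by (simp add: E_iff)
    ultimately have "(b, b) \<in> E\<^sup>+" by (rule rtrancl_into_trancl1)
    then show False using no_loop by simp
  qed
  have "is_dpath V w a b (ys @ [b])"
    unfolding is_dpath_def
  proof (intro conjI allI impI)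
    show "ys @ [b] \<noteq> []" by simp
    show "hd (ys @ [b]) = a" using Pys ne by (simp add: is_dpath_def)
    show "last (ys @ [b]) = b" by simp
    show "set (ys @ [b]) \<subseteq> V" using Pys bV by (simp add: is_dpath_def)
    show "distinct (ys @ [b])" using Pys bnot by (simp add: is_dpath_def)
    fix k assume k: "Suc k < length (ys @ [b])"
    show "w ((ys @ [b]) ! Suc k) ((ys @ [b]) ! k) \<noteq> 0"
    proof (cases "Suc k < length ys")
      case True
      then have "w (ys ! Suc k) (ys ! k) \<noteq> 0" by (rule dpath_edge[OF Pys])
      then show ?thesis using True by (simp add: nth_append)
    next
      case False
      then have "k = length ys - 1" "Suc k = length ys" using k by auto
      moreover have "last ys = j" using Pys by (simp add: is_dpath_def)
      ultimately show ?thesis using j ne by (simp add: nth_append last_conv_nth)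
    qed
  qed
  then show "xs \<in> {xs. is_dpath V w a b xs}" using xs by simp
qed


lemma sum_paths_snoc:
  assumes ab: "a \<noteq> b" and bV: "b \<in> V"
  shows "total_effect V w a b = (\<Sum>j\<in>{j \<in> V. w b j \<noteq> 0}. w b j * total_effect V w a j)"
proof -
  let ?J = "{j \<in> V. w b j \<noteq> 0}"
  let ?f = "\<lambda>(j::'v, ys::'v list). ys @ [b]"
  let ?S = "SIGMA j:?J. {ys. is_dpath V w a j ys}"
  have inj: "inj_on ?f ?S"
  proof (rule inj_onI)
    fix x y assume x: "x \<in> ?S" and y: "y \<in> ?S" and eq: "?f x = ?f y"
    obtain j ys where xx: "x = (j, ys)" by (cases x)
    obtain j' ys' where yy: "y = (j', ys')" by (cases y)
    have "ys = ys'" using eq xx yy by simp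
    moreover have "j = last ys" "j' = last ys'" using x y xx yy by (auto simp: is_dpath_def)
    ultimately show "x = y" using xx yy by simp
  qed
  have "total_effect V w a b = sum (path_weight w) (?f ` ?S)"
    unfolding total_effect_def using paths_decomp[OF ab bV] by simp
  also have "\<dots> = sum (path_weight w \<circ> ?f) ?S"
    by (rule sum.reindex[OF inj])
  also have "\<dots> = (\<Sum>(j, ys)\<in>?S. (path_weight w \<circ> ?f) (j, ys))"
    by (rule sum.cong) auto
  also have "\<dots> = sum (\<lambda>j. sum (\<lambda>ys. (path_weight w \<circ> ?f) (j, ys)) {ys. is_dpath V w a j ys}) ?J"
  proof (rule sum.Sigma[symmetric])
    show "finite ?J" using finV by simp
    show "\<forall>j\<in>?J. finite {ys. is_dpath V w a j ys}" using paths_finite by blast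
  qed
  also have "\<dots> = (\<Sum>j\<in>?J. w b j * total_effect V w a j)"
  proof (rule sum.cong[OF refl])
    fix j assume "j \<in> ?J"
    have "sum (\<lambda>ys. (path_weight w \<circ> ?f) (j, ys)) {ys. is_dpath V w a j ys}
        = (\<Sum>ys\<in>{ys. is_dpath V w a j ys}. path_weight w ys * w b j)"
    proof (rule sum.cong[OF refl])
      fix ys assume "ys \<in> {ys. is_dpath V w a j ys}"
      then have "ys \<noteq> []" "last ys = j" by (auto simp: is_dpath_def)
      then show "(path_weight w \<circ> ?f) (j, ys) = path_weight w ys * w b j"
        by (simp add: pw_snoc)
    qed
    also have "\<dots> = w b j * total_effect V w a j"
      by (simp add: total_effect_def sum_distrib_left mult.commute)
    finally show "sum (\<lambda>ys. (path_weight w \<circ> ?f) (j, ys)) {ys. is_dpath V w a j ys} = w b j * total_effect V w a j" .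
  qed
  finally show ?thesis .
qed

lemma TE_rec:
  assumes aV: "a \<in> V" and bV: "b \<in> V"
  shows "total_effect V w a b = (if a = b then 1 else 0) + (\<Sum>j\<in>V. w b j * total_effect V w a j)"
proof (cases "a = b")
  case True
  have "(\<Sum>j\<in>V. w b j * total_effect V w a j) = 0"
  proof (rule sum.neutral, rule ballI)
    fix j assume "j \<in> V"
    show "w b j * total_effect V w a j = 0"
    proof (rule ccontr)
      assume "w b j * total_effect V w a j \<noteq> 0"
      then have "w b j \<noteq> 0" "total_effect V w a j \<noteq> 0" by auto
      then have "(j, b) \<in> E" "(a, j) \<in> E\<^sup>*" using E_iff TE_nz by auto
      then have "(a, b) \<in> E\<^sup>+" by (meson rtrancl_into_trancl1)
      then show False using True no_loop by simp
    qed
  qed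
  then show ?thesis using True TE_refl[OF aV] by simp
next
  case False
  have "(\<Sum>j\<in>{j \<in> V. w b j \<noteq> 0}. w b j * total_effect V w a j) = (\<Sum>j\<in>V. w b j * total_effect V w a j)"
    by (rule sum.mono_neutral_left[OF finV]) auto
  then show ?thesis using sum_paths_snoc[OF False bV] False by simp
qed

end


locale me_model =
  fixes p :: nat and c :: "nat \<Rightarrow> nat \<Rightarrow> real" and U :: "nat set"
  assumes sm: "sem_me p c U"
begin

sublocale dag "me_nodes p" c
proof
  show "finite (me_nodes p)" by (simp add: me_nodes_def)
  show "\<And>x y. c y x \<noteq> 0 \<Longrightarrow> x \<in> me_nodes p \<and> y \<in> me_nodes p"
    using sm by (auto simp: sem_me_def me_nodes_def)
  show "acyclic (edge_rel (me_nodes p) c)" using sm by (simp add: sem_me_def)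
qed

abbreviation "N \<equiv> me_nodes p"
abbreviation "att \<equiv> me_att p c U"
abbreviation "grp \<equiv> me_group p c U"

lemma E_nodes: "(x, y) \<in> E \<Longrightarrow> x \<in> N \<and> y \<in> N"
  by (simp add: edge_rel_def)

lemma U_sub: "U \<subseteq> N" using sm by (simp add: sem_me_def)

lemma U_nochild: "u \<in> U \<Longrightarrow> (u, y) \<notin> E"
  using sm by (auto simp: sem_me_def children_def)

lemma par_notU: "(q, x) \<in> E \<Longrightarrow> q \<notin> U"
  using U_nochild by blast

lemma attD: "att x i \<Longrightarrow> x \<in> N \<and> i \<in> N \<and> i \<notin> U"
  unfolding me_att_def parents_def using U_sub E_nodes par_notU by blast

lemma att_notU: "att x i \<Longrightarrow> x \<notin> U \<Longrightarrow> x = i"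
  unfolding me_att_def by blast

lemma att_U: "att x i \<Longrightarrow> x \<in> U \<Longrightarrow> (i, x) \<in> E \<and> (\<forall>q. (q, x) \<in> E \<longrightarrow> q = i \<or> (q, i) \<in> E\<^sup>+)"
  unfolding me_att_def parents_def ancestors_def by blast

lemma att_self: "i \<in> N \<Longrightarrow> i \<notin> U \<Longrightarrow> att i i"
  unfolding me_att_def by blast

lemma att_uniq: assumes "att x i" "att x i'" shows "i = i'"
proof (cases "x \<in> U")
  case False then show ?thesis using assms att_notU by blast
next
  case True
  then have a: "(i, x) \<in> E" "(i', x) \<in> E" "\<forall>q. (q, x) \<in> E \<longrightarrow> q = i \<or> (q, i) \<in> E\<^sup>+"
    "\<forall>q. (q, x) \<in> E \<longrightarrow> q = i' \<or> (q, i') \<in> E\<^sup>+" using att_U assms by blast+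
  show ?thesis
  proof (rule ccontr)
    assume "i \<noteq> i'"
    then have "(i', i) \<in> E\<^sup>+" "(i, i') \<in> E\<^sup>+" using a by blast+
    then have "(i, i) \<in> E\<^sup>+" by (rule trancl_trans[rotated])
    then show False using no_loop by blast
  qed
qed

sublocale G: grouping N att
  by unfold_locales (rule att_uniq)

lemma grp_gg: "grp v = ggroup N att v"
  by (simp add: me_group_def ggroup_def)

lemma grp_self: "v \<in> N \<Longrightarrow> v \<in> grp v"
  using G.gg_self grp_gg by simp

lemma grp_sym: "u \<in> grp v \<Longrightarrow> v \<in> N \<Longrightarrow> v \<in> grp u"
  using G.gg_sym grp_gg by simp

lemma grp_eq: "u \<in> grp v \<Longrightarrow> v \<in> N \<Longrightarrow> grp u = grp v"
  using G.gg_eq grp_gg by simp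

lemma grp_mem: "u \<in> grp v \<longleftrightarrow> u \<in> N \<and> (u = v \<or> (\<exists>i. att u i \<and> att v i))"
  using G.mem_gg grp_gg by simp

lemma att_reach: assumes "att v t" "(x, v) \<in> E\<^sup>+" shows "(x, t) \<in> E\<^sup>*"
proof (cases "v \<in> U")
  case False
  then have "v = t" using att_notU assms(1) by blast
  then show ?thesis using assms(2) by simp
next
  case True
  obtain z where z: "(x, z) \<in> E\<^sup>*" "(z, v) \<in> E" using tranclD2[OF assms(2)] by blast
  then have "z = t \<or> (z, t) \<in> E\<^sup>+" using att_U[OF assms(1) True] by blast
  then show ?thesis using z(1) by auto
qed

lemma group_anc:
  assumes "(k, v) \<in> E\<^sup>*" "v \<in> grp h" "h \<in> N" "h \<notin> U" "k \<notin> U"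
  shows "(k, h) \<in> E\<^sup>*"
proof -
  have "v = h \<or> (\<exists>t. att v t \<and> att h t)" using assms(2) grp_mem by blast
  then have "v = h \<or> att v h" using att_notU[OF _ assms(4)] by blast
  then show ?thesis
  proof
    assume "v = h" then show ?thesis using assms(1) by simp
  next
    assume av: "att v h"
    show ?thesis
    proof (cases "k = v")
      case True
      then have "v \<notin> U" using assms(5) by simp
      then have "v = h" using att_notU av by blast
      then show ?thesis using True by simp
    next
      case False
      then have "(k, v) \<in> E\<^sup>+" using assms(1) by (simp add: rtrancl_eq_or_trancl)
      then show ?thesis using att_reach av by blast
    qed
  qed
qed

lemma G_An:
  assumes y: "y \<in> N" and y': "y' \<in> grp y" and xy: "(x, y) \<in> E\<^sup>+" and xn: "x \<notin> grp y"
  shows "(x, y') \<in> E\<^sup>+"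
proof -
  have "y' = y \<or> (\<exists>t. att y' t \<and> att y t)" using y' grp_mem by blast
  then show ?thesis
  proof
    assume "y' = y" then show ?thesis using xy by simp
  next
    assume "\<exists>t. att y' t \<and> att y t"
    then obtain t where t: "att y' t" "att y t" by blast
    have xt: "(x, t) \<in> E\<^sup>*" using att_reach[OF t(2) xy] .
    have "x \<noteq> t"
    proof
      assume "x = t"
      then have "att x x" using attD[OF t(2)] att_self by blast
      then have "x \<in> grp y" using t(2) \<open>x = t\<close> attD[OF t(2)] grp_mem by blast
      then show False using xn by simp
    qed
    then have xt': "(x, t) \<in> E\<^sup>+" using xt by (simp add: rtrancl_eq_or_trancl)
    show ?thesis
    proof (cases "y' \<in> U")
      case False then show ?thesis using att_notU t(1) xt' by blast
    next
      case True
      then have "(t, y') \<in> E" using att_U t(1) by blast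
      with xt' show ?thesis by (rule trancl_into_trancl)
    qed
  qed
qed

lemma anc_card_less:
  assumes "(x, y) \<in> E\<^sup>+"
  shows "card (ancestors N c x) < card (ancestors N c y)"
proof (rule psubset_card_mono)
  have "ancestors N c y \<subseteq> N"
    unfolding ancestors_def using E_nodes by (auto dest: tranclD)
  then show "finite (ancestors N c y)" using finite_subset finV by blast
  have sub: "ancestors N c x \<subseteq> ancestors N c y"
    unfolding ancestors_def using assms by (auto intro: trancl_trans)
  have "x \<in> ancestors N c y" using assms by (simp add: ancestors_def)
  moreover have "x \<notin> ancestors N c x" using no_loop by (simp add: ancestors_def)
  ultimately show "ancestors N c x \<subset> ancestors N c y" using sub by blast
qed

lemma mix_diag: "k \<in> N \<Longrightarrow> me_mix p c k k = 1"
  by (simp add: me_mix_def TE_refl)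

lemma mix_nz: "me_mix p c v k \<noteq> 0 \<Longrightarrow> (k, v) \<in> E\<^sup>*"
  by (simp add: me_mix_def TE_nz)

lemma mix_rec: "v \<in> N \<Longrightarrow> b \<in> N \<Longrightarrow>
  me_mix p c v b = (if v = b then 1 else 0) + (\<Sum>j\<in>N. c v j * me_mix p c j b)"
  unfolding me_mix_def using TE_rec[of b v] by (simp add: eq_commute)

lemma mix_faithful:
  assumes "me_faithful_a p c" "k \<in> N" "v \<in> N" "(k, v) \<in> E\<^sup>*"
  shows "me_mix p c v k \<noteq> 0"
proof (cases "k = v")
  case True then show ?thesis using mix_diag assms by simp
next
  case False
  then have "(k, v) \<in> E\<^sup>+" using assms(4) by (simp add: rtrancl_eq_or_trancl)
  then have "v \<in> descendants N c k" by (simp add: descendants_def)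
  then show ?thesis using assms(1,2) by (simp add: me_faithful_a_def me_mix_def)
qed

lemma exists_max:
  assumes "S \<subseteq> N" "S \<noteq> {}"
  shows "\<exists>q\<in>S. \<forall>q'\<in>S. (q, q') \<notin> E\<^sup>+"
proof -
  have "E \<subseteq> N \<times> N" using E_nodes by auto
  then have "finite E" using finV finite_subset by blast
  then have "wf (E\<inverse>)" using acyc by (rule finite_acyclic_wf_converse)
  then have "wf ((E\<inverse>)\<^sup>+)" by (rule wf_trancl)
  then have wf: "wf ((E\<^sup>+)\<inverse>)" by (simp add: trancl_converse)
  obtain x where "x \<in> S" using assms(2) by blast
  then obtain z where "z \<in> S" "\<forall>y. (y, z) \<in> (E\<^sup>+)\<inverse> \<longrightarrow> y \<notin> S"
    using wf unfolding wf_eq_minimal by blast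
  then show ?thesis by auto
qed

end


lemma me_main:
  assumes sm: "sem_me p c U" and fa: "me_faithful_a p c"
    and sm': "sem_me p c' U'" and eqv: "me_mix_equiv p c U c' U'"
    and aog: "me_aog p c' U' = me_aog p c U"
    and i: "i \<in> me_nodes p" and cij: "c' i j \<noteq> 0"
  shows "\<exists>x y. x \<in> me_group p c U j \<and> y \<in> me_group p c U i \<and> (x, y) \<in> (edge_rel (me_nodes p) c)\<^sup>*"
proof -
  interpret M: me_model p c U by (rule me_model.intro[OF sm])
  interpret M': me_model p c' U' by (rule me_model.intro[OF sm'])
  let ?N = "me_nodes p"
  let ?C = "me_cols p U"
  let ?C' = "me_cols p U'"
  let ?E = "edge_rel ?N c"
  let ?E' = "edge_rel ?N c'"
  let ?W' = "me_mix p c'"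
  obtain \<sigma> sc where bij: "bij_betw \<sigma> ?C ?C'" and
    sc: "\<And>k. k \<in> ?C \<Longrightarrow> sc k \<noteq> 0 \<and> (\<forall>v \<in> ?N. me_mix p c' v (\<sigma> k) = sc k * me_mix p c v k)"
    using eqv unfolding me_mix_equiv_def by blast
  define \<tau> where "\<tau> = inv_into ?C \<sigma>"
  have C_iff: "\<And>k. k \<in> ?C \<longleftrightarrow> k \<in> ?N \<and> k \<notin> U" by (simp add: me_cols_def)
  have C'_iff: "\<And>k. k \<in> ?C' \<longleftrightarrow> k \<in> ?N \<and> k \<notin> U'" by (simp add: me_cols_def)
  have sig: "\<And>k. k \<in> ?C \<Longrightarrow> \<sigma> k \<in> ?C'" using bij bij_betwE by blast
  have tau: "\<And>b. b \<in> ?C' \<Longrightarrow> \<tau> b \<in> ?C \<and> \<sigma> (\<tau> b) = b"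
  proof -
    fix b assume b: "b \<in> ?C'"
    have "\<sigma> ` ?C = ?C'" using bij by (simp add: bij_betw_def)
    then have "b \<in> \<sigma> ` ?C" using b by simp
    then show "\<tau> b \<in> ?C \<and> \<sigma> (\<tau> b) = b" unfolding \<tau>_def by (simp add: inv_into_into f_inv_into_f)
  qed
  have Z1: "\<And>k v. k \<in> ?C \<Longrightarrow> v \<in> ?N \<Longrightarrow> (?W' v (\<sigma> k) \<noteq> 0 \<longleftrightarrow> (k, v) \<in> ?E\<^sup>*)"
  proof -
    fix k v assume k: "k \<in> ?C" and v: "v \<in> ?N"
    have eq: "?W' v (\<sigma> k) = sc k * me_mix p c v k" and s0: "sc k \<noteq> 0" using sc[OF k] v by auto
    show "?W' v (\<sigma> k) \<noteq> 0 \<longleftrightarrow> (k, v) \<in> ?E\<^sup>*"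
    proof
      assume "?W' v (\<sigma> k) \<noteq> 0"
      then have "me_mix p c v k \<noteq> 0" using eq by simp
      then show "(k, v) \<in> ?E\<^sup>*" by (rule M.mix_nz)
    next
      assume "(k, v) \<in> ?E\<^sup>*"
      then have "me_mix p c v k \<noteq> 0" using M.mix_faithful[OF fa _ v] k C_iff[of k] by blast
      then show "?W' v (\<sigma> k) \<noteq> 0" using eq s0 by simp
    qed
  qed
  have Z2a: "\<And>b. b \<in> ?N \<Longrightarrow> ?W' b b = 1" by (rule M'.mix_diag)
  have Z2b: "\<And>v b. ?W' v b \<noteq> 0 \<Longrightarrow> (b, v) \<in> ?E'\<^sup>*" by (rule M'.mix_nz)
  have E'_iff: "\<And>x y. (x, y) \<in> ?E' \<longleftrightarrow> c' y x \<noteq> 0" by (rule M'.E_iff)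
  have E'_C': "q \<in> ?C'" if "(q, x) \<in> ?E'" for q x
    using M'.par_notU[OF that] M'.E_nodes[OF that] C'_iff[of q] by blast
  have rt: "\<And>x y z. (x, y) \<in> ?E'\<^sup>* \<Longrightarrow> (y, z) \<in> ?E'\<^sup>* \<Longrightarrow> x \<noteq> z \<Longrightarrow> (x, z) \<in> ?E'\<^sup>+"
    by (meson rtrancl_eq_or_trancl rtrancl_trans)
  have anti: "\<And>x y. (x, y) \<in> ?E'\<^sup>* \<Longrightarrow> (y, x) \<in> ?E'\<^sup>* \<Longrightarrow> x = y"
  proof (rule ccontr)
    fix x y assume "(x, y) \<in> ?E'\<^sup>*" "(y, x) \<in> ?E'\<^sup>*" "x \<noteq> y"
    then have "(x, y) \<in> ?E'\<^sup>+" "(y, x) \<in> ?E'\<^sup>*" by (auto simp: rtrancl_eq_or_trancl)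
    then have "(x, x) \<in> ?E'\<^sup>+" by (rule trancl_rtrancl_trancl)
    then show False using M'.no_loop by blast
  qed
  have single: "?W' v q = c' v q"
    if v: "v \<in> ?N" and q: "q \<in> ?N" and vq: "v \<noteq> q"
      and van: "\<And>j. j \<in> ?N \<Longrightarrow> j \<noteq> q \<Longrightarrow> c' v j * ?W' j q = 0" for v q
  proof -
    have "?W' v q = (\<Sum>j\<in>?N. c' v j * ?W' j q)" using M'.mix_rec[OF v q] vq by simp
    also have "\<dots> = c' v q * ?W' q q"
      by (rule sum.remove[OF M'.finV q, THEN trans]) (simp add: sum.neutral van)
    also have "\<dots> = c' v q" using Z2a[OF q] by simp
    finally show ?thesis .
  qed
  have fix1: "\<sigma> k = k" if k: "k \<in> ?C" and kU': "k \<notin> U'" for k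
  proof -
    let ?a = "\<sigma> k"
    have aC': "?a \<in> ?C'" using sig[OF k] .
    have aN: "?a \<in> ?N" using aC' C'_iff[of "?a"] by blast
    have kN: "k \<in> ?N" using k C_iff[of k] by blast
    have h1: "(k, ?a) \<in> ?E\<^sup>*" using Z1[OF k aN] Z2a[OF aN] by simp
    have h2: "(?a, k) \<in> ?E'\<^sup>*" using Z1[OF k kN] Z2b by blast
    have kC': "k \<in> ?C'" using kN kU' C'_iff[of k] by blast
    obtain b where b: "b \<in> ?C" "\<sigma> b = k" using tau[OF kC'] by blast
    have "(b, k) \<in> ?E\<^sup>*" using Z1[OF b(1) kN] Z2a[OF kN] b(2) by simp
    then have "(b, ?a) \<in> ?E\<^sup>*" using h1 by (rule rtrancl_trans)
    then have "?W' ?a k \<noteq> 0" using Z1[OF b(1) aN] b(2) by simp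
    then have "(k, ?a) \<in> ?E'\<^sup>*" using Z2b by blast
    then show "?a = k" by (rule anti[OF h2])
  qed
  have step1: "\<sigma> k \<in> me_group p c U k" if k: "k \<in> ?C" for k
  proof -
    let ?a = "\<sigma> k"
    have aC': "?a \<in> ?C'" using sig[OF k] .
    have aN: "?a \<in> ?N" using aC' C'_iff[of "?a"] by blast
    have kN: "k \<in> ?N" using k C_iff[of k] by blast
    have h1: "(k, ?a) \<in> ?E\<^sup>*" using Z1[OF k aN] Z2a[OF aN] by simp
    have h2: "(?a, k) \<in> ?E'\<^sup>*" using Z1[OF k kN] Z2b by blast
    show ?thesis
    proof (cases "k \<in> U'")
      case False
      then show ?thesis using fix1[OF k False] M.grp_self[OF kN] by simp
    next
      case True
      have ak: "?a \<noteq> k" using aC' True C'_iff[of "?a"] by auto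
      have claim: "\<forall>q. (q, k) \<in> ?E' \<longrightarrow> (q, ?a) \<in> ?E'\<^sup>*"
      proof (rule ccontr)
        assume "\<not> ?thesis"
        then have ne: "{q. (q, k) \<in> ?E' \<and> (q, ?a) \<notin> ?E'\<^sup>*} \<noteq> {}" by blast
        have sub: "{q. (q, k) \<in> ?E' \<and> (q, ?a) \<notin> ?E'\<^sup>*} \<subseteq> ?N" using M'.E_nodes by blast
        obtain q where qD: "(q, k) \<in> ?E'" "(q, ?a) \<notin> ?E'\<^sup>*"
          and qmax: "\<forall>q'\<in>{q. (q, k) \<in> ?E' \<and> (q, ?a) \<notin> ?E'\<^sup>*}. (q, q') \<notin> ?E'\<^sup>+"
          using M'.exists_max[OF sub ne] by blast
        have qN: "q \<in> ?N" using qD M'.E_nodes by blast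
        have qC': "q \<in> ?C'" using E'_C' qD by blast
        have kq: "k \<noteq> q" using qD M'.no_loop by blast
        have "?W' k q = c' k q"
        proof (rule single[OF kN qN kq])
          fix j assume jN: "j \<in> ?N" and jq: "j \<noteq> q"
          show "c' k j * ?W' j q = 0"
          proof (rule ccontr)
            assume "c' k j * ?W' j q \<noteq> 0"
            then have jk: "(j, k) \<in> ?E'" and qj: "(q, j) \<in> ?E'\<^sup>*" using E'_iff Z2b by auto
            show False
            proof (cases "(j, ?a) \<in> ?E'\<^sup>*")
              case True
              then have "(q, ?a) \<in> ?E'\<^sup>*" using qj by (rule rtrancl_trans[rotated])
              then show False using qD(2) by simp
            next
              case False
              then have "(q, j) \<notin> ?E'\<^sup>+" using qmax jk by blast
              then show False using qj jq by (simp add: rtrancl_eq_or_trancl)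
            qed
          qed
        qed
        then have "?W' k q \<noteq> 0" using qD E'_iff by simp
        then have "(\<tau> q, k) \<in> ?E\<^sup>*" using Z1[OF _ kN, of "\<tau> q"] tau[OF qC'] by simp
        then have "(\<tau> q, ?a) \<in> ?E\<^sup>*" using h1 by simp
        then have "?W' ?a q \<noteq> 0" using Z1[OF _ aN, of "\<tau> q"] tau[OF qC'] by simp
        then show False using Z2b qD by blast
      qed
      have h2': "(?a, k) \<in> ?E'\<^sup>+" using h2 ak by (simp add: rtrancl_eq_or_trancl)
      obtain z where z: "(?a, z) \<in> ?E'\<^sup>*" "(z, k) \<in> ?E'" using tranclD2[OF h2'] by blast
      have "(z, ?a) \<in> ?E'\<^sup>*" using claim z(2) by blast
      then have "z = ?a" using anti[OF z(1)] by simp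
      then have ak_edge: "(?a, k) \<in> ?E'" using z by simp
      have "me_att p c' U' k ?a"
        unfolding me_att_def parents_def ancestors_def
        using True ak_edge claim by (auto simp: rtrancl_eq_or_trancl)
      moreover have "me_att p c' U' ?a ?a" using M'.att_self aN aC' C'_iff[of "?a"] by blast
      ultimately have a_in: "?a \<in> me_group p c' U' k" using aN M'.grp_mem by blast
      have "me_group p c' U' k \<in> me_aog p c' U'" using kN unfolding me_aog_def by (rule imageI)
      then have "me_group p c' U' k \<in> me_aog p c U" using aog by simp
      then obtain v where v: "v \<in> ?N" "me_group p c' U' k = me_group p c U v"
        by (auto simp: me_aog_def)
      have "k \<in> me_group p c U v" using v M'.grp_self[OF kN] by simp
      then have "me_group p c U k = me_group p c U v" using M.grp_eq v(1) by blast
      then show ?thesis using a_in v by simp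
    qed
  qed
  define A where "A = {b \<in> ?C'. \<exists>y \<in> me_group p c U i. (\<tau> b, y) \<in> ?E\<^sup>*}"
  have claim: "\<forall>q. (q, i) \<in> ?E' \<longrightarrow> q \<in> A"
  proof (rule ccontr)
    assume "\<not> ?thesis"
    then have ne: "{q. (q, i) \<in> ?E' \<and> q \<notin> A} \<noteq> {}" by blast
    have sub: "{q. (q, i) \<in> ?E' \<and> q \<notin> A} \<subseteq> ?N" using M'.E_nodes by blast
    obtain q where qD: "(q, i) \<in> ?E'" "q \<notin> A"
      and qmax: "\<forall>q'\<in>{q. (q, i) \<in> ?E' \<and> q \<notin> A}. (q, q') \<notin> ?E'\<^sup>+"
      using M'.exists_max[OF sub ne] by blast
    have qN: "q \<in> ?N" using qD M'.E_nodes by blast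
    have qC': "q \<in> ?C'" using E'_C' qD by blast
    have tq: "\<tau> q \<in> ?C" "\<sigma> (\<tau> q) = q" using tau[OF qC'] by auto
    have iq: "i \<noteq> q" using qD M'.no_loop by blast
    have "?W' i q = c' i q"
    proof (rule single[OF i qN iq])
      fix j assume jN: "j \<in> ?N" and jq: "j \<noteq> q"
      show "c' i j * ?W' j q = 0"
      proof (rule ccontr)
        assume "c' i j * ?W' j q \<noteq> 0"
        then have ji: "(j, i) \<in> ?E'" and qj: "(q, j) \<in> ?E'\<^sup>*" and Wjq: "?W' j q \<noteq> 0"
          using E'_iff Z2b by auto
        show False
        proof (cases "j \<in> A")
          case True
          then obtain y where jC': "j \<in> ?C'" and y: "y \<in> me_group p c U i" "(\<tau> j, y) \<in> ?E\<^sup>*"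
            by (auto simp: A_def)
          have tj: "\<tau> j \<in> ?C" "\<sigma> (\<tau> j) = j" using tau[OF jC'] by auto
          have "(\<tau> q, j) \<in> ?E\<^sup>*" using Z1[OF tq(1) jN] Wjq tq(2) by simp
          moreover have "j \<in> me_group p c U (\<tau> j)" using step1[OF tj(1)] tj(2) by simp
          ultimately have "(\<tau> q, \<tau> j) \<in> ?E\<^sup>*"
            using M.group_anc tj(1) tq(1) C_iff[of "\<tau> j"] C_iff[of "\<tau> q"] by blast
          then have "(\<tau> q, y) \<in> ?E\<^sup>*" using y(2) by simp
          then have "q \<in> A" using qC' y(1) by (auto simp: A_def)
          then show False using qD by simp
        next
          case False
          then have "(q, j) \<notin> ?E'\<^sup>+" using qmax ji by blast
          then show False using qj jq by (simp add: rtrancl_eq_or_trancl)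
        qed
      qed
    qed
    then have "?W' i q \<noteq> 0" using qD E'_iff by simp
    then have "(\<tau> q, i) \<in> ?E\<^sup>*" using Z1[OF tq(1) i] tq(2) by simp
    then have "q \<in> A" using qC' M.grp_self[OF i] by (auto simp: A_def)
    then show False using qD by simp
  qed
  have "(j, i) \<in> ?E'" using cij E'_iff by simp
  then have "j \<in> A" using claim by blast
  then obtain y where jC': "j \<in> ?C'" and y: "y \<in> me_group p c U i" "(\<tau> j, y) \<in> ?E\<^sup>*"
    by (auto simp: A_def)
  have tj: "\<tau> j \<in> ?C" "\<sigma> (\<tau> j) = j" using tau[OF jC'] by auto
  have "j \<in> me_group p c U (\<tau> j)" using step1[OF tj(1)] tj(2) by simp
  then have "\<tau> j \<in> me_group p c U j" using M.grp_sym tj(1) C_iff[of "\<tau> j"] by blast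
  then show ?thesis using y by blast
qed


definition rk :: "nat + nat \<Rightarrow> nat" where
  "rk = case_sum (\<lambda>_. 0) Suc"

locale ur_model =
  fixes n m :: nat and A B :: "nat \<Rightarrow> nat \<Rightarrow> real"
  assumes su: "sem_ur n m A B"
begin

abbreviation "NU \<equiv> ur_nodes n m"
abbreviation "EU \<equiv> edge_rel (ur_nodes n m) (ur_w A B)"
abbreviation "uatt \<equiv> ur_att n m A B"
abbreviation "ugrp \<equiv> ur_group n m A B"

lemma edge_rk: assumes "(x, y) \<in> EU" shows "rk x < rk y \<and> (\<exists>j. y = Inr j)"
proof -
  have w: "ur_w A B y x \<noteq> 0" using assms by (simp add: edge_rel_def)
  show ?thesis
  proof (cases y)
    case (Inl a) then show ?thesis using w by (cases x) (auto simp: ur_w_def)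
  next
    case (Inr j)
    then show ?thesis
    proof (cases x)
      case (Inl i) then show ?thesis using Inr by (simp add: rk_def)
    next
      case (Inr k)
      then have "A j k \<noteq> 0" using w \<open>y = Inr j\<close> by (simp add: ur_w_def)
      then have "k < j" using su by (simp add: sem_ur_def)
      then show ?thesis using Inr \<open>y = Inr j\<close> by (simp add: rk_def)
    qed
  qed
qed

lemma trancl_rk: "(x, y) \<in> EU\<^sup>+ \<Longrightarrow> rk x < rk y"
proof (induction rule: trancl_induct)
  case (base y) then show ?case using edge_rk by blast
next
  case (step y z) then show ?case using edge_rk[of y z] by linarith
qed

lemma rtrancl_rk: "(x, y) \<in> EU\<^sup>* \<Longrightarrow> rk x \<le> rk y"
  using trancl_rk by (fastforce simp: rtrancl_eq_or_trancl)

lemma no_loop_u: "(x, x) \<notin> EU\<^sup>+"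
  using trancl_rk by blast

lemma uatt_obs: "uatt (Inr l) t \<Longrightarrow> t = Inr l"
  unfolding ur_att_def by blast

lemma uatt_lat: "uatt (Inl i) t \<Longrightarrow> Inl i \<in> NU \<and> (Inl i, t) \<in> EU \<and> (\<forall>z. (Inl i, z) \<in> EU \<longrightarrow> z = t \<or> (t, z) \<in> EU\<^sup>+)"
  unfolding ur_att_def children_def descendants_def by (auto simp: ur_nodes_def)

lemma uatt_uniq: assumes "uatt x t" "uatt x t'" shows "t = t'"
proof (cases x)
  case (Inr l) then show ?thesis using assms uatt_obs by blast
next
  case (Inl i)
  have a: "(Inl i, t) \<in> EU" "(Inl i, t') \<in> EU" "\<forall>z. (Inl i, z) \<in> EU \<longrightarrow> z = t \<or> (t, z) \<in> EU\<^sup>+"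
    "\<forall>z. (Inl i, z) \<in> EU \<longrightarrow> z = t' \<or> (t', z) \<in> EU\<^sup>+" using uatt_lat assms Inl by blast+
  show ?thesis
  proof (rule ccontr)
    assume "t \<noteq> t'"
    then have "(t, t') \<in> EU\<^sup>+" "(t', t) \<in> EU\<^sup>+" using a by blast+
    then have "rk t < rk t'" "rk t' < rk t" using trancl_rk by blast+
    then show False by linarith
  qed
qed

sublocale UG: grouping NU uatt
  by unfold_locales (rule uatt_uniq)

lemma ugrp_gg: "ugrp v = ggroup NU uatt v"
  by (simp add: ur_group_def ggroup_def)

lemma ugrp_self: "v \<in> NU \<Longrightarrow> v \<in> ugrp v"
  using UG.gg_self ugrp_gg by simp

lemma ugrp_eq: "u \<in> ugrp v \<Longrightarrow> v \<in> NU \<Longrightarrow> ugrp u = ugrp v"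
  using UG.gg_eq ugrp_gg by simp

lemma ugrp_mem: "u \<in> ugrp v \<longleftrightarrow> u \<in> NU \<and> (u = v \<or> (\<exists>t. uatt u t \<and> uatt v t))"
  using UG.mem_gg ugrp_gg by simp

lemma ugrp_obs: "Inr l \<in> ugrp (Inr j) \<Longrightarrow> l = j"
  using ugrp_mem uatt_obs by blast

lemma Inr_NU: "Inr j \<in> NU \<longleftrightarrow> j < n" by (auto simp: ur_nodes_def)
lemma Inl_NU: "Inl i \<in> NU \<longleftrightarrow> i < m" by (auto simp: ur_nodes_def)

lemma obs_att_self: "j < n \<Longrightarrow> uatt (Inr j) (Inr j)"
  by (simp add: ur_att_def)

end

definition ukey :: "nat \<Rightarrow> (nat + nat) set \<Rightarrow> nat" where
  "ukey m G = (if \<exists>j. Inr j \<in> G then m + (LEAST j. Inr j \<in> G) else (LEAST i. Inl i \<in> G))"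

lemma ur_part:
  assumes su: "sem_ur n m A B"
  shows "\<exists>R. linear_order_on (ur_aog n m A B) R \<and>
    (\<forall>(A', B', \<pi>) \<in> ur_aog_class n m A B. \<forall>x \<in> ur_nodes n m. \<forall>y \<in> ur_nodes n m.
       ur_w A' B' (ur_relabel \<pi> y) (ur_relabel \<pi> x) \<noteq> 0 \<and>
       ur_group n m A B x \<noteq> ur_group n m A B y \<longrightarrow>
       (ur_group n m A B x, ur_group n m A B y) \<in> R)"
proof -
  interpret M: ur_model n m A B by (rule ur_model.intro[OF su])
  let ?aog = "ur_aog n m A B"
  let ?R = "{(G1, G2). G1 \<in> ?aog \<and> G2 \<in> ?aog \<and> ukey m G1 \<le> ukey m G2}"
  have keyobs: "ukey m (M.ugrp (Inr j)) = m + j" if "j < n" for j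
  proof -
    have "Inr j \<in> M.ugrp (Inr j)" using M.ugrp_self that M.Inr_NU by blast
    moreover have "(LEAST l. Inr l \<in> M.ugrp (Inr j)) = j"
      by (rule Least_equality) (use calculation M.ugrp_obs in auto)
    ultimately show ?thesis by (auto simp: ukey_def)
  qed
  have inj: "inj_on (ukey m) ?aog"
  proof (rule inj_onI)
    fix G1 G2 assume G1: "G1 \<in> ?aog" and G2: "G2 \<in> ?aog" and eq: "ukey m G1 = ukey m G2"
    obtain v1 where v1: "v1 \<in> M.NU" "G1 = M.ugrp v1" using G1 by (auto simp: ur_aog_def)
    obtain v2 where v2: "v2 \<in> M.NU" "G2 = M.ugrp v2" using G2 by (auto simp: ur_aog_def)
    have share: "G1 = G2" if "z \<in> G1" "z \<in> G2" for z
      using that v1 v2 M.ugrp_eq by metis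
    have lat: "\<exists>i. i < m \<and> Inl i \<in> G" if "G = M.ugrp v" "v \<in> M.NU" "\<not> (\<exists>j. Inr j \<in> G)" for G v
    proof -
      have "v \<in> G" using that M.ugrp_self by blast
      have "\<exists>i. v = Inl i"
      proof (cases v)
        case (Inl i) then show ?thesis by simp
      next
        case (Inr b)
        then have "Inr b \<in> G" using \<open>v \<in> G\<close> by simp
        then show ?thesis using that(3) by blast
      qed
      then obtain i where "v = Inl i" by blast
      then show ?thesis using \<open>v \<in> G\<close> that(2) M.Inl_NU by blast
    qed
    show "G1 = G2"
    proof (cases "\<exists>j. Inr j \<in> G1")
      case True
      note T1 = True
      show ?thesis
      proof (cases "\<exists>j. Inr j \<in> G2")
        case True
        then have "(LEAST j. Inr j \<in> G1) = (LEAST j. Inr j \<in> G2)" using T1 eq by (simp add: ukey_def)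
        moreover have "Inr (LEAST j. Inr j \<in> G1) \<in> G1" using T1 by (metis LeastI)
        moreover have "Inr (LEAST j. Inr j \<in> G2) \<in> G2" using True by (metis LeastI)
        ultimately show ?thesis using share by metis
      next
        case False
        obtain i where i: "i < m" "Inl i \<in> G2" using lat[OF v2(2) v2(1) False] by blast
        have "(LEAST i. Inl i \<in> G2) \<le> i" using i(2) by (rule Least_le)
        then have "ukey m G2 < m" using i False by (simp add: ukey_def)
        moreover have "ukey m G1 \<ge> m" using T1 by (simp add: ukey_def)
        ultimately show ?thesis using eq by simp
      qed
    next
      case False
      note F1 = False
      obtain i where i: "i < m" "Inl i \<in> G1" using lat[OF v1(2) v1(1) False] by blast
      have "(LEAST i. Inl i \<in> G1) \<le> i" using i(2) by (rule Least_le)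
      then have k1: "ukey m G1 < m" using i False by (simp add: ukey_def)
      show ?thesis
      proof (cases "\<exists>j. Inr j \<in> G2")
        case True
        then have "ukey m G2 \<ge> m" by (simp add: ukey_def)
        then show ?thesis using eq k1 by simp
      next
        case False
        obtain i2 where i2: "Inl i2 \<in> G2" using lat[OF v2(2) v2(1) False] by blast
        have "(LEAST i. Inl i \<in> G1) = (LEAST i. Inl i \<in> G2)" using F1 False eq by (simp add: ukey_def)
        moreover have "Inl (LEAST i. Inl i \<in> G1) \<in> G1" using i(2) by (metis LeastI)
        moreover have "Inl (LEAST i. Inl i \<in> G2) \<in> G2" using i2 by (metis LeastI)
        ultimately show ?thesis using share by metis
      qed
    qed
  qed
  have lin: "linear_order_on ?aog ?R" by (rule linear_order_key[OF inj])
  have cons: "ukey m (M.ugrp x) < ukey m (M.ugrp y)"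
    if cl: "(A', B', \<pi>) \<in> ur_aog_class n m A B" and x: "x \<in> M.NU" and y: "y \<in> M.NU"
      and w': "ur_w A' B' (ur_relabel \<pi> y) (ur_relabel \<pi> x) \<noteq> 0"
      and gne: "M.ugrp x \<noteq> M.ugrp y" for A' B' \<pi> x y
  proof -
    have su': "sem_ur n m A' B'" and bij: "bij_betw \<pi> {..<m} {..<m}"
      and aog: "ur_aog n m A' B' = (\<lambda>G. ur_relabel \<pi> ` G) ` ur_aog n m A B"
      using cl by (auto simp: ur_aog_class_def)
    interpret M': ur_model n m A' B' by (rule ur_model.intro[OF su'])
    have rl_Inl: "\<And>i. ur_relabel \<pi> (Inl i) = Inl (\<pi> i)" by (simp add: ur_relabel_def)
    have rl_Inr: "\<And>j. ur_relabel \<pi> (Inr j) = Inr j" by (simp add: ur_relabel_def)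
    obtain j where yj: "y = Inr j"
      using w' by (cases y; cases x) (auto simp: ur_w_def ur_relabel_def)
    have jn: "j < n" using y yj M.Inr_NU by simp
    have ky: "ukey m (M.ugrp y) = m + j" using keyobs[OF jn] yj by simp
    show ?thesis
    proof (cases x)
      case (Inr l)
      have "A' j l \<noteq> 0" using w' Inr yj by (simp add: ur_w_def ur_relabel_def)
      then have "l < j" using su' by (simp add: sem_ur_def)
      moreover have "l < n" using x Inr M.Inr_NU by simp
      ultimately show ?thesis using keyobs ky Inr by simp
    next
      case (Inl i)
      have im: "i < m" using x Inl M.Inl_NU by simp
      have B': "B' j (\<pi> i) \<noteq> 0" using w' Inl yj by (simp add: ur_w_def ur_relabel_def)
      have pim: "\<pi> i < m" using bij im by (auto simp: bij_betw_def)
      have edge': "(Inl (\<pi> i), Inr j) \<in> M'.EU"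
        using B' pim jn by (simp add: edge_rel_def ur_w_def M.Inr_NU M.Inl_NU)
      have obs_lt: "l < j" if lx: "Inr l \<in> M.ugrp x" for l
      proof -
        have "Inr l \<noteq> x" using Inl by simp
        then obtain t where "M.uatt (Inr l) t" "M.uatt x t" using lx M.ugrp_mem by blast
        then have att: "M.uatt (Inl i) (Inr l)" using M.uatt_obs Inl by blast
        have ln: "l < n" using lx M.ugrp_mem M.Inr_NU by blast
        have l_ne: "l \<noteq> j"
        proof
          assume "l = j"
          then have "Inl i \<in> M.ugrp (Inr j)"
            using att M.obs_att_self[OF jn] M.ugrp_mem x Inl by blast
          then have "M.ugrp x = M.ugrp y" using M.ugrp_eq y yj Inl by simp
          then show False using gne by simp
        qed
        have "M.ugrp (Inr l) \<in> ur_aog n m A B" using ln M.Inr_NU by (simp add: ur_aog_def)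
        then have "ur_relabel \<pi> ` M.ugrp (Inr l) \<in> ur_aog n m A' B'" using aog by simp
        then obtain v where v: "v \<in> M'.NU" "ur_relabel \<pi> ` M.ugrp (Inr l) = M'.ugrp v"
          by (auto simp: ur_aog_def)
        have "Inl i \<in> M.ugrp (Inr l)" using att M.obs_att_self[OF ln] M.ugrp_mem x Inl by blast
        then have a1: "Inl (\<pi> i) \<in> M'.ugrp v" using v(2) rl_Inl by (metis imageI)
        have "Inr l \<in> M.ugrp (Inr l)" using M.ugrp_self ln M.Inr_NU by blast
        then have a2: "Inr l \<in> M'.ugrp v" using v(2) rl_Inr by (metis imageI)
        have "M'.ugrp (Inr l) = M'.ugrp v" using M'.ugrp_eq[OF a2 v(1)] .
        then have "Inl (\<pi> i) \<in> M'.ugrp (Inr l)" using a1 by simp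
        then obtain t where "M'.uatt (Inl (\<pi> i)) t" "M'.uatt (Inr l) t" using M'.ugrp_mem by blast
        then have att': "M'.uatt (Inl (\<pi> i)) (Inr l)" using M'.uatt_obs by blast
        then have "Inr j = Inr l \<or> (Inr l, Inr j) \<in> M'.EU\<^sup>+" using M'.uatt_lat edge' by blast
        then have "rk (Inr l) \<le> rk (Inr j)" using M'.trancl_rk by fastforce
        then have "l \<le> j" by (simp add: rk_def)
        then show ?thesis using l_ne by simp
      qed
      show ?thesis
      proof (cases "\<exists>l. Inr l \<in> M.ugrp x")
        case True
        then have "Inr (LEAST l. Inr l \<in> M.ugrp x) \<in> M.ugrp x" by (metis LeastI)
        then have "(LEAST l. Inr l \<in> M.ugrp x) < j" by (rule obs_lt)
        then show ?thesis using True ky by (simp add: ukey_def)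
      next
        case False
        have "Inl i \<in> M.ugrp x" using M.ugrp_self x Inl by blast
        then have "(LEAST i. Inl i \<in> M.ugrp x) \<le> i" by (rule Least_le)
        then show ?thesis using False ky im by (simp add: ukey_def)
      qed
    qed
  qed
  show ?thesis
  proof (intro exI conjI)
    show "linear_order_on ?aog ?R" by (rule lin)
    show "\<forall>(A', B', \<pi>) \<in> ur_aog_class n m A B. \<forall>x \<in> ur_nodes n m. \<forall>y \<in> ur_nodes n m.
       ur_w A' B' (ur_relabel \<pi> y) (ur_relabel \<pi> x) \<noteq> 0 \<and>
       ur_group n m A B x \<noteq> ur_group n m A B y \<longrightarrow>
       (ur_group n m A B x, ur_group n m A B y) \<in> ?R"
    proof
      fix t assume t: "t \<in> ur_aog_class n m A B"
      obtain A' B' \<pi> where tt: "t = (A', B', \<pi>)" by (cases t) auto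
      have cl: "(A', B', \<pi>) \<in> ur_aog_class n m A B" using t tt by simp
      have "\<forall>x \<in> ur_nodes n m. \<forall>y \<in> ur_nodes n m.
       ur_w A' B' (ur_relabel \<pi> y) (ur_relabel \<pi> x) \<noteq> 0 \<and>
       ur_group n m A B x \<noteq> ur_group n m A B y \<longrightarrow>
       (ur_group n m A B x, ur_group n m A B y) \<in> ?R"
      proof (intro ballI impI)
        fix x y assume x: "x \<in> M.NU" and y: "y \<in> M.NU"
          and h: "ur_w A' B' (ur_relabel \<pi> y) (ur_relabel \<pi> x) \<noteq> 0 \<and> M.ugrp x \<noteq> M.ugrp y"
        have "ukey m (M.ugrp x) < ukey m (M.ugrp y)" using cons[OF cl x y] h by blast
        moreover have "M.ugrp x \<in> ?aog" "M.ugrp y \<in> ?aog" using x y by (auto simp: ur_aog_def)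
        ultimately show "(M.ugrp x, M.ugrp y) \<in> ?R" by simp
      qed
      then show "case t of (A', B', \<pi>) \<Rightarrow> \<forall>x \<in> ur_nodes n m. \<forall>y \<in> ur_nodes n m.
       ur_w A' B' (ur_relabel \<pi> y) (ur_relabel \<pi> x) \<noteq> 0 \<and>
       ur_group n m A B x \<noteq> ur_group n m A B y \<longrightarrow>
       (ur_group n m A B x, ur_group n m A B y) \<in> ?R" using tt by simp
    qed
  qed
qed


lemma modp: "(u::nat) < p \<Longrightarrow> (a * p + u) mod p = u"
  by simp

lemma me_part:
  assumes sm: "sem_me p c U" and fa: "me_faithful_a p c"
  shows "\<exists>R. linear_order_on (me_aog p c U) R \<and>
    (\<forall>(c', U') \<in> me_aog_class p c U. \<forall>i \<in> me_nodes p. \<forall>j \<in> me_nodes p.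
       c' i j \<noteq> 0 \<and> me_group p c U j \<noteq> me_group p c U i \<longrightarrow>
       (me_group p c U j, me_group p c U i) \<in> R)"
proof -
  interpret M: me_model p c U by (rule me_model.intro[OF sm])
  let ?aog = "me_aog p c U"
  define \<phi> where "\<phi> v = card (ancestors (me_nodes p) c v) * p + v" for v
  define \<kappa> where "\<kappa> G = Min (\<phi> ` G)" for G
  let ?R = "{(G1, G2). G1 \<in> ?aog \<and> G2 \<in> ?aog \<and> \<kappa> G1 \<le> \<kappa> G2}"
  have gfin: "finite (M.grp v)" for v
    using M.grp_mem M.finV by (metis (no_types, lifting) finite_subset subsetI)
  have kin: "\<exists>u \<in> M.grp v. \<kappa> (M.grp v) = \<phi> u" if "v \<in> M.N" for v
  proof -
    have "M.grp v \<noteq> {}" using M.grp_self[OF that] by blast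
    then have "\<kappa> (M.grp v) \<in> \<phi> ` M.grp v" unfolding \<kappa>_def using gfin by (intro Min_in) auto
    then show ?thesis by auto
  qed
  have kle: "\<kappa> (M.grp v) \<le> \<phi> u" if "u \<in> M.grp v" for u v
    unfolding \<kappa>_def using gfin that by (intro Min_le) auto
  have phi_inj: "u1 = u2" if "\<phi> u1 = \<phi> u2" "u1 \<in> M.N" "u2 \<in> M.N" for u1 u2
  proof -
    have l1: "u1 < p" and l2: "u2 < p" using that(2,3) by (simp_all add: me_nodes_def)
    have e1: "\<phi> u1 mod p = u1" unfolding \<phi>_def by (rule modp[OF l1])
    have e2: "\<phi> u2 mod p = u2" unfolding \<phi>_def by (rule modp[OF l2])
    have "u1 = \<phi> u1 mod p" using e1 by (rule sym)
    also have "\<dots> = \<phi> u2 mod p" using that(1) by (rule arg_cong)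
    also have "\<dots> = u2" by (rule e2)
    finally show ?thesis .
  qed
  have inj: "inj_on \<kappa> ?aog"
  proof (rule inj_onI)
    fix G1 G2 assume G1: "G1 \<in> ?aog" and G2: "G2 \<in> ?aog" and eq: "\<kappa> G1 = \<kappa> G2"
    obtain v1 where v1: "v1 \<in> M.N" "G1 = M.grp v1" using G1 by (auto simp: me_aog_def)
    obtain v2 where v2: "v2 \<in> M.N" "G2 = M.grp v2" using G2 by (auto simp: me_aog_def)
    obtain u1 where u1: "u1 \<in> G1" "\<kappa> G1 = \<phi> u1" using kin[OF v1(1)] v1(2) by blast
    obtain u2 where u2: "u2 \<in> G2" "\<kappa> G2 = \<phi> u2" using kin[OF v2(1)] v2(2) by blast
    have "u1 \<in> M.N" "u2 \<in> M.N" using u1 u2 v1 v2 M.grp_mem by blast+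
    then have "u1 = u2" using phi_inj u1 u2 eq by simp
    then have "u1 \<in> G2" using u2 by simp
    then show "G1 = G2" using u1(1) v1 v2 M.grp_eq by metis
  qed
  have lin: "linear_order_on ?aog ?R" by (rule linear_order_key[OF inj])
  have cons: "\<kappa> (M.grp j) \<le> \<kappa> (M.grp i)"
    if cl: "(c', U') \<in> me_aog_class p c U" and i: "i \<in> M.N" and j: "j \<in> M.N"
      and cij: "c' i j \<noteq> 0" and gne: "M.grp j \<noteq> M.grp i" for c' U' i j
  proof -
    have sm': "sem_me p c' U'" and eqv: "me_mix_equiv p c U c' U'" and aog: "me_aog p c' U' = me_aog p c U"
      using cl by (auto simp: me_aog_class_def)
    obtain x y where x: "x \<in> M.grp j" and y: "y \<in> M.grp i" and xy: "(x, y) \<in> M.E\<^sup>*"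
      using me_main[OF sm fa sm' eqv aog i cij] by blast
    have xN: "x \<in> M.N" and yN: "y \<in> M.N" using x y M.grp_mem by blast+
    have gx: "M.grp x = M.grp j" using M.grp_eq[OF x j] .
    have gy: "M.grp y = M.grp i" using M.grp_eq[OF y i] .
    have "x \<noteq> y" using gx gy gne by auto
    then have xy': "(x, y) \<in> M.E\<^sup>+" using xy by (simp add: rtrancl_eq_or_trancl)
    have xny: "x \<notin> M.grp y"
    proof
      assume "x \<in> M.grp y"
      then have "M.grp x = M.grp y" using M.grp_eq yN by blast
      then show False using gx gy gne by simp
    qed
    obtain y' where y': "y' \<in> M.grp i" "\<kappa> (M.grp i) = \<phi> y'" using kin[OF i] by blast
    have "y' \<in> M.grp y" using y'(1) gy by simp
    then have "(x, y') \<in> M.E\<^sup>+" using M.G_An[OF yN _ xy' xny] by blast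
    then have ca: "card (ancestors M.N c x) < card (ancestors M.N c y')" by (rule M.anc_card_less)
    have xp: "x < p" using xN by (simp add: me_nodes_def)
    have "Suc (card (ancestors M.N c x)) * p \<le> card (ancestors M.N c y') * p"
      using ca by (intro mult_le_mono1) simp
    then have "\<phi> x < \<phi> y'" using xp by (simp add: \<phi>_def)
    moreover have "\<kappa> (M.grp j) \<le> \<phi> x" using kle x by blast
    ultimately show ?thesis using y'(2) by simp
  qed
  show ?thesis
  proof (intro exI conjI)
    show "linear_order_on ?aog ?R" by (rule lin)
    show "\<forall>(c', U') \<in> me_aog_class p c U. \<forall>i \<in> me_nodes p. \<forall>j \<in> me_nodes p.
       c' i j \<noteq> 0 \<and> me_group p c U j \<noteq> me_group p c U i \<longrightarrow>
       (me_group p c U j, me_group p c U i) \<in> ?R"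
    proof
      fix t assume t: "t \<in> me_aog_class p c U"
      obtain c' U' where tt: "t = (c', U')" by (cases t) auto
      have cl: "(c', U') \<in> me_aog_class p c U" using t tt by simp
      have "\<forall>i \<in> me_nodes p. \<forall>j \<in> me_nodes p.
       c' i j \<noteq> 0 \<and> me_group p c U j \<noteq> me_group p c U i \<longrightarrow>
       (me_group p c U j, me_group p c U i) \<in> ?R"
      proof (intro ballI impI)
        fix i j assume i: "i \<in> M.N" and j: "j \<in> M.N"
          and h: "c' i j \<noteq> 0 \<and> M.grp j \<noteq> M.grp i"
        have "\<kappa> (M.grp j) \<le> \<kappa> (M.grp i)" using cons[OF cl i j] h by blast
        moreover have "M.grp j \<in> ?aog" "M.grp i \<in> ?aog" using i j by (auto simp: me_aog_def)
        ultimately show "(M.grp j, M.grp i) \<in> ?R" by simp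
      qed
      then show "case t of (c', U') \<Rightarrow> \<forall>i \<in> me_nodes p. \<forall>j \<in> me_nodes p.
       c' i j \<noteq> 0 \<and> me_group p c U j \<noteq> me_group p c U i \<longrightarrow>
       (me_group p c U j, me_group p c U i) \<in> ?R" using tt by simp
    qed
  qed
qed

theorem proposition1:
  shows "(\<forall>p c U. sem_me p c U \<and> me_faithful_a p c \<longrightarrow>
            (\<exists>R. linear_order_on (me_aog p c U) R \<and>
               (\<forall>(c', U') \<in> me_aog_class p c U. \<forall>i \<in> me_nodes p. \<forall>j \<in> me_nodes p.
                  c' i j \<noteq> 0 \<and> me_group p c U j \<noteq> me_group p c U i \<longrightarrow>
                  (me_group p c U j, me_group p c U i) \<in> R)))
       \<and> (\<forall>n m A B. sem_ur n m A B \<and> ur_faithful_a n m A B \<longrightarrow>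
            (\<exists>R. linear_order_on (ur_aog n m A B) R \<and>
               (\<forall>(A', B', \<pi>) \<in> ur_aog_class n m A B. \<forall>x \<in> ur_nodes n m. \<forall>y \<in> ur_nodes n m.
                  ur_w A' B' (ur_relabel \<pi> y) (ur_relabel \<pi> x) \<noteq> 0 \<and>
                  ur_group n m A B x \<noteq> ur_group n m A B y \<longrightarrow>
                  (ur_group n m A B x, ur_group n m A B y) \<in> R)))"
  apply (intro conjI allI impI)
   apply (erule conjE)
   apply (erule (1) me_part)
  apply (erule conjE)
  apply (erule ur_part)
  done

end
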